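(* Let $X$ be a real Banach space, $f\in\Gamma_0(X)$, $f(\bar x)=0$, and let $x^*\in\mathrm{bd}\,\partial f(\bar x)$. Let $\xi>0$, let $\hat x^*\in X^*\setminus\partial f(\bar x)$ with $\|\hat x^*-x^*\|<\xi$, let $\hat x\in X\setminus\{\bar x\}$ satisfy $f(\hat x)<\langle \hat x^*,\hat x-\bar x\rangle$, and let $z^*\in X^*$ with $\|z^*\|=1$ and $\langle z^*,\hat x-\bar x\rangle=\|\hat x-\bar x\|$. Define $g(u):=f(u)+\langle -x^*+\xi z^*,u-\bar x\rangle$ for $u\in X$. Then $\mathrm{Er}\,g(\bar x)\le 2\xi$.
   Context: $\Gamma_0(X)$ denotes the class of extended-real-valued proper convex lower semicontinuous functions on $X$. For convex $f$, $\partial f(x):=\{x^*\in X^*\mid \langle x^*,u-x\rangle\le f(u)-f(x)\ \forall u\in X\}$; $\mathrm{bd}$ denotes the boundary in the norm topology of $X^*$. $S_g:=\{x\mid g(x)\le 0\}$, $d(x,S)=\inf_{u\in S}\|u-x\|$ ($d(x,\emptyset)=+\infty$), and $\mathrm{Er}\,g(\bar x):=\liminf_{x\to\bar x,\ g(x)>0}\frac{g(x)}{d(x,S_g)}$. *)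

theory Defs
  imports "HOL-Analysis.Analysis"
begin

(* The dual space X^* is modelled by the bounded linear functionals 'a \<Rightarrow>\<^sub>L real,
  with the operator norm (so topological notions on it are w.r.t. the norm topology). *)

definition proper_fun :: "('a \<Rightarrow> ereal) \<Rightarrow> bool" where
  "proper_fun f \<longleftrightarrow> (\<forall>x. f x \<noteq> -\<infinity>) \<and> (\<exists>x. f x \<noteq> \<infinity>)"

definition convex_fun :: "('a::real_vector \<Rightarrow> ereal) \<Rightarrow> bool" where
  "convex_fun f \<longleftrightarrow> (\<forall>x y t. 0 \<le> t \<and> t \<le> 1 \<longrightarrow>
      f ((1 - t) *\<^sub>R x + t *\<^sub>R y) \<le> ereal (1 - t) * f x + ereal t * f y)"

definition lsc_fun :: "('a::topological_space \<Rightarrow> ereal) \<Rightarrow> bool" where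
  "lsc_fun f \<longleftrightarrow> (\<forall>c. closed {x. f x \<le> c})"

definition Gamma0 :: "('a::real_normed_vector \<Rightarrow> ereal) set" where
  "Gamma0 = {f. proper_fun f \<and> convex_fun f \<and> lsc_fun f}"

definition subdiff :: "('a::real_normed_vector \<Rightarrow> ereal) \<Rightarrow> 'a \<Rightarrow> ('a \<Rightarrow>\<^sub>L real) set" where
  "subdiff f x = {xs. \<forall>u. ereal (blinfun_apply xs (u - x)) \<le> f u - f x}"

definition sublevel0 :: "('a \<Rightarrow> ereal) \<Rightarrow> 'a set" where
  "sublevel0 g = {x. g x \<le> 0}"

definition edist :: "'a::metric_space \<Rightarrow> 'a set \<Rightarrow> ereal" where
  "edist x S = (if S = {} then \<infinity> else ereal (infdist x S))"

(* Error bound modulus: liminf over x \<rightarrow> xbar, x \<noteq> xbar, with g x > 0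
  (liminf over an empty/trivial filter is +\<infinity>). *)
definition Er :: "('a::real_normed_vector \<Rightarrow> ereal) \<Rightarrow> 'a \<Rightarrow> ereal" where
  "Er g xbar = Liminf (at xbar within {x. g x > 0}) (\<lambda>x. g x / edist x (sublevel0 g))"

end

theory Submission
  imports Defs
begin

lemma subdiff_closed:
  fixes f :: "'a::real_normed_vector \<Rightarrow> ereal"
  shows "closed (subdiff f x)"
proof -
  have "subdiff f x = {xs. \<forall>u. ereal (blinfun_apply xs (u - x)) \<le> f u - f x}"
    by (simp add: subdiff_def)
  moreover have "closed {xs::'a \<Rightarrow>\<^sub>L real. \<forall>u. ereal (blinfun_apply xs (u - x)) \<le> f u - f x}"
  proof (rule closed_Collect_all)
    fix u
    show "closed {xs::'a \<Rightarrow>\<^sub>L real. ereal (blinfun_apply xs (u - x)) \<le> f u - f x}"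
      by (rule closed_Collect_le) (auto intro!: continuous_intros)
  qed
  ultimately show ?thesis by simp
qed

theorem mainTheorem4:
  fixes f :: "'a::banach \<Rightarrow> ereal"
    and xbar xhat :: 'a
    and xs xhs zs :: "'a \<Rightarrow>\<^sub>L real"
    and \<xi> :: real
  assumes "f \<in> Gamma0"
    and "f xbar = 0"
    and "xs \<in> frontier (subdiff f xbar)"
    and "\<xi> > 0"
    and "xhs \<notin> subdiff f xbar"
    and "norm (xhs - xs) < \<xi>"
    and "xhat \<noteq> xbar"
    and "f xhat < ereal (blinfun_apply xhs (xhat - xbar))"
    and "norm zs = 1"
    and "blinfun_apply zs (xhat - xbar) = norm (xhat - xbar)"
  shows "Er (\<lambda>u. f u + ereal (blinfun_apply (- xs + \<xi> *\<^sub>R zs) (u - xbar))) xbar \<le> ereal (2 * \<xi>)"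
proof -
  define g where "g = (\<lambda>u. f u + ereal (blinfun_apply (- xs + \<xi> *\<^sub>R zs) (u - xbar)))"
  define r where "r = norm (xhat - xbar)"
  define S where "S = sublevel0 g"
  have rpos: "r > 0" using assms(7) by (simp add: r_def)
  have hprop: "proper_fun f" and cvx: "convex_fun f" using assms(1) by (auto simp: Gamma0_def)
  have xsin: "xs \<in> subdiff f xbar"
    using assms(3) frontier_subset_closed[OF subdiff_closed[of f xbar]] by blast
  have fge: "ereal (xs (u - xbar)) \<le> f u" for u
    using xsin assms(2) by (simp add: subdiff_def)
  have gge: "ereal (\<xi> * zs (u - xbar)) \<le> g u" for u
  proof -
    have "ereal (\<xi> * zs (u - xbar)) = ereal (xs (u - xbar)) + ereal (blinfun_apply (- xs + \<xi> *\<^sub>R zs) (u - xbar))"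
      by (simp add: blinfun.add_left blinfun.minus_left blinfun.scaleR_left blinfun.diff_left)
    also have "\<dots> \<le> g u" unfolding g_def by (rule add_right_mono[OF fge])
    finally show ?thesis .
  qed
  have gx: "g xbar = 0" using assms(2) by (simp add: g_def)
  have xbarS: "xbar \<in> S" using gx by (simp add: S_def sublevel0_def)
  have Sne: "S \<noteq> {}" using xbarS by blast
  have zsle: "zs (u - xbar) \<le> 0" if "u \<in> S" for u
  proof -
    have "g u \<le> 0" using that by (simp add: S_def sublevel0_def)
    hence "ereal (\<xi> * zs (u - xbar)) \<le> 0" by (rule order_trans[OF gge])
    hence "\<xi> * zs (u - xbar) \<le> 0" by simp
    thus ?thesis using assms(4) by (simp add: mult_le_0_iff)
  qed
  have zsbound: "zs v \<le> norm v" for v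
    using norm_blinfun[of zs v] assms(9) by simp
  obtain a where fa: "f xhat = ereal a"
    using hprop assms(8) unfolding proper_fun_def
    by (cases "f xhat") auto
  have alt: "a < xhs (xhat - xbar)" using assms(8) fa by simp
  define c where "c = a + blinfun_apply (- xs + \<xi> *\<^sub>R zs) (xhat - xbar)"
  have c_lt: "c < 2 * \<xi> * r"
  proof -
    have "c = a - xs (xhat - xbar) + \<xi> * r"
      using assms(10) by (simp add: c_def r_def blinfun.add_left blinfun.minus_left blinfun.scaleR_left blinfun.diff_left)
    also have "\<dots> < (xhs - xs) (xhat - xbar) + \<xi> * r"
      using alt by (simp add: blinfun.diff_left)
    also have "(xhs - xs) (xhat - xbar) \<le> norm (xhs - xs) * r"
      using norm_blinfun[of "xhs - xs" "xhat - xbar"] by (simp add: r_def)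
    also have "norm (xhs - xs) * r \<le> \<xi> * r" using assms(6) rpos by simp
    finally show ?thesis by simp
  qed
  define xt where "xt = (\<lambda>t::real. (1 - t) *\<^sub>R xbar + t *\<^sub>R xhat)"
  have xt_diff: "xt t - xbar = t *\<^sub>R (xhat - xbar)" for t
    by (simp add: xt_def algebra_simps)
  have key: "g (xt t) > 0 \<and> g (xt t) / edist (xt t) S \<le> ereal (2 * \<xi>)" if t: "0 < t" "t \<le> 1" for t
  proof -
    have "f (xt t) \<le> ereal (1 - t) * f xbar + ereal t * f xhat"
      using cvx t unfolding convex_fun_def xt_def by auto
    hence f1: "f (xt t) \<le> ereal (t * a)" using assms(2) fa by simp
    have "g (xt t) \<le> ereal (t * a) + ereal (blinfun_apply (- xs + \<xi> *\<^sub>R zs) (xt t - xbar))"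
      unfolding g_def by (rule add_right_mono[OF f1])
    hence gup: "g (xt t) \<le> ereal (t * c)"
      by (simp only: xt_diff blinfun.scaleR_right c_def) (simp add: algebra_simps)
    have glo: "ereal (\<xi> * (t * r)) \<le> g (xt t)"
      using gge[of "xt t"] assms(10) by (simp add: xt_diff blinfun.scaleR_right r_def)
    have tr: "t * r > 0" using t rpos by simp
    have gpos: "g (xt t) > 0"
      using glo tr assms(4) by (metis ereal_less(2) less_le_trans mult_pos_pos)
    obtain v where gv: "g (xt t) = ereal v" using gup gpos by (cases "g (xt t)") auto
    have vle: "v \<le> t * c" using gup gv by simp
    have dge: "t * r \<le> infdist (xt t) S"
      unfolding infdist_notempty[OF Sne]
    proof (rule cINF_greatest[OF Sne])
      fix u assume u: "u \<in> S"
      have "zs (xt t - u) = zs (xt t - xbar) - zs (u - xbar)"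
        by (metis blinfun.diff_right diff_diff_eq2 diff_add_cancel add_diff_cancel_left' diff_diff_add)
      also have "zs (xt t - xbar) = t * r" using assms(10) by (simp add: xt_diff blinfun.scaleR_right r_def)
      finally have "t * r \<le> zs (xt t - u)" using zsle[OF u] by simp
      also have "\<dots> \<le> dist (xt t) u" using zsbound by (simp add: dist_norm)
      finally show "t * r \<le> dist (xt t) u" .
    qed
    have dpos: "infdist (xt t) S > 0" using dge tr by linarith
    have "g (xt t) / edist (xt t) S = ereal (v / infdist (xt t) S)"
      using Sne dpos gv by (simp add: edist_def)
    also have "v / infdist (xt t) S \<le> (t * c) / (t * r)"
    proof -
      have "v > 0" using gpos gv by simp
      hence "v / infdist (xt t) S \<le> v / (t * r)"
        using dge tr by (simp add: divide_left_mono)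
      also have "\<dots> \<le> (t * c) / (t * r)" using vle tr by (intro divide_right_mono) auto
      finally show ?thesis .
    qed
    also have "(t * c) / (t * r) = c / r" using t by simp
    also have "c / r \<le> 2 * \<xi>" using c_lt rpos by (simp add: divide_le_eq)
    finally show ?thesis using gpos by simp
  qed
  have "Er g xbar \<le> ereal (2 * \<xi>)"
    unfolding Er_def Liminf_def
  proof (rule SUP_least)
    fix P assume "P \<in> {P. eventually P (at xbar within {x. g x > 0})}"
    hence "eventually P (at xbar within {x. g x > 0})" by simp
    then obtain d where d: "d > 0" and hP: "\<And>x. x \<in> {x. g x > 0} \<Longrightarrow> x \<noteq> xbar \<Longrightarrow> dist x xbar < d \<Longrightarrow> P x"
      unfolding eventually_at by blast
    define t where "t = min 1 (d / (2 * r))"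
    have t0: "0 < t" "t \<le> 1" using d rpos by (auto simp: t_def)
    have "t * r \<le> d / 2" using rpos d by (simp add: t_def min_def field_simps)
    hence distlt: "dist (xt t) xbar < d"
      using d t0 by (simp add: dist_norm xt_diff r_def)
    have neq: "xt t \<noteq> xbar" using xt_diff[of t] t0 assms(7) by auto
    have "P (xt t)" using hP key[OF t0] neq distlt by auto
    thus "(INF x\<in>Collect P. g x / edist x (sublevel0 g)) \<le> ereal (2 * \<xi>)"
      using key[OF t0] by (intro INF_lower2[of "xt t"]) (auto simp: S_def)
  qed
  thus ?thesis by (simp add: g_def)
qed

end
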